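(* There exist a scalar product space $(\mathcal{V},g)$, skew-adjoint endomorphisms $J_1,\dots,J_m$ of $\mathcal{V}$ satisfying $J_iJ_j+J_jJ_i=2c_i\delta_{ij}\,\mathrm{id}$ ($1\le i,j\le m$) for some real $c_i$, and real numbers $\mu_0,\dots,\mu_m$, such that the (quasi-Clifford, hence Osserman) algebraic curvature tensor $R=\mu_0R^0+\sum_{i=1}^m\mu_iR^{J_i}$ is not Jacobi-dual.
   Context: A scalar product space is a finite-dimensional real vector space with a nondegenerate symmetric bilinear form $g$ (possibly indefinite); $\varepsilon_X=g(X,X)$, $X$ nonnull if $\varepsilon_X\ne0$. $R^0(X,Y,Z,W)=g(Y,Z)g(X,W)-g(X,Z)g(Y,W)$; for skew-adjoint $J$, $R^J(X,Y,Z,W)=g(JX,Z)g(JY,W)-g(JY,Z)g(JX,W)+2g(JX,Y)g(JZ,W)$. The Jacobi operator is $\mathcal{J}_X(Y)=\sum_{i}\varepsilon_{E_i}R(Y,X,X,E_i)E_i$ for an orthonormal basis $(E_i)$. An eigenvector of $\mathcal{J}_X$ is a nonzero $Y$ with $\mathcal{J}_X(Y)=\lambda Y$, $\lambda\in\mathbb{R}$. $R$ is Osserman if the characteristic polynomial of $\mathcal{J}_X$ is independent of unit timelike $X$ and of unit spacelike $X$. $R$ is Jacobi-dual if for all $X,Y$ with $X$ nonnull, $Y$ an eigenvector of $\mathcal{J}_X$ implies $X$ is an eigenvector of $\mathcal{J}_Y$. *)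

theory Defs
  imports "Jordan_Normal_Form.Determinant"
begin

text \<open>Model of a scalar product space: the coordinate space of column vectors of
  dimension n (carrier_vec n) with the bilinear form g(x,y) = x . (G y), where G is a
  symmetric invertible n x n real matrix (possibly indefinite).\<close>

definition scalar_product_space :: "nat \<Rightarrow> real mat \<Rightarrow> bool" where
  "scalar_product_space n G \<longleftrightarrow>
     G \<in> carrier_mat n n \<and> transpose_mat G = G \<and> det G \<noteq> 0"

definition gform :: "real mat \<Rightarrow> real vec \<Rightarrow> real vec \<Rightarrow> real" where
  "gform G x y = x \<bullet> (G *\<^sub>v y)"

definition skew_adjoint :: "nat \<Rightarrow> real mat \<Rightarrow> real mat \<Rightarrow> bool" where
  "skew_adjoint n G J \<longleftrightarrow> J \<in> carrier_mat n n \<and>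
     (\<forall>x\<in>carrier_vec n. \<forall>y\<in>carrier_vec n. gform G (J *\<^sub>v x) y = - gform G x (J *\<^sub>v y))"

definition R0 :: "real mat \<Rightarrow> real vec \<Rightarrow> real vec \<Rightarrow> real vec \<Rightarrow> real vec \<Rightarrow> real" where
  "R0 G X Y Z W = gform G Y Z * gform G X W - gform G X Z * gform G Y W"

definition RJ :: "real mat \<Rightarrow> real mat \<Rightarrow> real vec \<Rightarrow> real vec \<Rightarrow> real vec \<Rightarrow> real vec \<Rightarrow> real" where
  "RJ G J X Y Z W = gform G (J *\<^sub>v X) Z * gform G (J *\<^sub>v Y) W
     - gform G (J *\<^sub>v Y) Z * gform G (J *\<^sub>v X) W
     + 2 * gform G (J *\<^sub>v X) Y * gform G (J *\<^sub>v Z) W"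

definition orthonormal_basis :: "nat \<Rightarrow> real mat \<Rightarrow> real vec list \<Rightarrow> bool" where
  "orthonormal_basis n G E \<longleftrightarrow> length E = n \<and> (\<forall>i<n. E ! i \<in> carrier_vec n) \<and>
     (\<forall>i<n. \<forall>j<n. i \<noteq> j \<longrightarrow> gform G (E ! i) (E ! j) = 0) \<and>
     (\<forall>i<n. gform G (E ! i) (E ! i) = 1 \<or> gform G (E ! i) (E ! i) = -1)"

definition jacobi_op ::
  "nat \<Rightarrow> real mat \<Rightarrow> (real vec \<Rightarrow> real vec \<Rightarrow> real vec \<Rightarrow> real vec \<Rightarrow> real)
     \<Rightarrow> real vec \<Rightarrow> real vec \<Rightarrow> real vec" where
  "jacobi_op n G R X Y =
     (let E = (SOME E. orthonormal_basis n G E) in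
      vec n (\<lambda>k. \<Sum>i<n. gform G (E ! i) (E ! i) * R Y X X (E ! i) * (E ! i) $ k))"

definition is_eigenvector :: "nat \<Rightarrow> (real vec \<Rightarrow> real vec) \<Rightarrow> real vec \<Rightarrow> bool" where
  "is_eigenvector n A Y \<longleftrightarrow> Y \<in> carrier_vec n \<and> Y \<noteq> 0\<^sub>v n \<and> (\<exists>lam::real. A Y = lam \<cdot>\<^sub>v Y)"

definition jacobi_dual ::
  "nat \<Rightarrow> real mat \<Rightarrow> (real vec \<Rightarrow> real vec \<Rightarrow> real vec \<Rightarrow> real vec \<Rightarrow> real) \<Rightarrow> bool" where
  "jacobi_dual n G R \<longleftrightarrow>
     (\<forall>X\<in>carrier_vec n. \<forall>Y\<in>carrier_vec n. gform G X X \<noteq> 0 \<longrightarrow>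
        is_eigenvector n (jacobi_op n G R X) Y \<longrightarrow> is_eigenvector n (jacobi_op n G R Y) X)"

end

theory Submission
  imports Defs
begin



lemma gform_expand:
  assumes "G \<in> carrier_mat n n" "x \<in> carrier_vec n" "y \<in> carrier_vec n"
  shows "gform G x y = (\<Sum>a<n. \<Sum>b<n. x $ a * G $$ (a,b) * y $ b)"
  using assms unfolding gform_def
  by (auto simp: scalar_prod_def sum_distrib_left mult.assoc atLeast0LessThan intro!: sum.cong)

lemma gform_sym:
  assumes "G \<in> carrier_mat n n" "transpose_mat G = G" "x \<in> carrier_vec n" "y \<in> carrier_vec n"
  shows "gform G x y = gform G y x"
proof -
  have s: "G $$ (a,b) = G $$ (b,a)" if "a<n" "b<n" for a b
    using assms(1,2) that by (metis carrier_matD index_transpose_mat(1))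
  have "(\<Sum>a<n. \<Sum>b<n. x $ a * G $$ (a,b) * y $ b) = (\<Sum>b<n. \<Sum>a<n. x $ a * G $$ (a,b) * y $ b)"
    by (rule sum.swap)
  also have "\<dots> = (\<Sum>b<n. \<Sum>a<n. y $ b * G $$ (b,a) * x $ a)"
    by (intro sum.cong refl) (auto simp: s mult.commute mult.left_commute)
  finally show ?thesis using assms by (simp add: gform_expand)
qed

lemma gform_minus:
  assumes "G \<in> carrier_mat n n" "x \<in> carrier_vec n" "w \<in> carrier_vec n" "y \<in> carrier_vec n"
  shows "gform G (x - w) y = gform G x y - gform G w y"
  using assms by (simp add: gform_expand algebra_simps sum_subtractf)



lemma recon:
  assumes sps: "scalar_product_space n G" and ob: "orthonormal_basis n G E"
    and v: "v \<in> carrier_vec n"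
  shows "vec n (\<lambda>k. \<Sum>i<n. gform G (E!i) (E!i) * gform G v (E!i) * E!i $ k) = v"
proof -
  define w where "w = vec n (\<lambda>k. \<Sum>i<n. gform G (E!i) (E!i) * gform G v (E!i) * E!i $ k)"
  have G: "G \<in> carrier_mat n n" "transpose_mat G = G" "det G \<noteq> 0"
    using sps unfolding scalar_product_space_def by auto
  have Ec: "\<And>i. i<n \<Longrightarrow> E!i \<in> carrier_vec n" and lenE: "length E = n"
    and orth: "\<And>i j. i<n \<Longrightarrow> j<n \<Longrightarrow> i \<noteq> j \<Longrightarrow> gform G (E ! i) (E ! j) = 0"
    and eps: "\<And>i. i<n \<Longrightarrow> gform G (E ! i) (E ! i) = 1 \<or> gform G (E ! i) (E ! i) = -1"
    using ob unfolding orthonormal_basis_def by auto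
  have w: "w \<in> carrier_vec n" by (simp add: w_def)
  have gw: "gform G w (E!j) = gform G v (E!j)" if j: "j<n" for j
  proof -
    have GE: "G *\<^sub>v (E!j) \<in> carrier_vec n" using G Ec j by auto
    have gE: "gform G (E!i) (E!j) = (\<Sum>k<n. E!i$k * (G *\<^sub>v E!j)$k)" if "i<n" for i
      using GE carrier_matD[OF G(1)] by (simp add: gform_def scalar_prod_def atLeast0LessThan del: index_mult_mat_vec)
    have "gform G w (E!j) = (\<Sum>k<n. w$k * (G *\<^sub>v E!j)$k)"
      using GE carrier_matD[OF G(1)] by (simp add: gform_def scalar_prod_def atLeast0LessThan del: index_mult_mat_vec)
    also have "\<dots> = (\<Sum>k<n. \<Sum>i<n. gform G (E!i) (E!i) * gform G v (E!i) * (E!i$k * (G *\<^sub>v E!j)$k))"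
      by (simp add: w_def sum_distrib_right mult.assoc)
    also have "\<dots> = (\<Sum>i<n. \<Sum>k<n. gform G (E!i) (E!i) * gform G v (E!i) * (E!i$k * (G *\<^sub>v E!j)$k))"
      by (rule sum.swap)
    also have "\<dots> = (\<Sum>i<n. gform G (E!i) (E!i) * gform G v (E!i) * gform G (E!i) (E!j))"
      by (intro sum.cong refl) (simp add: gE sum_distrib_left)
    also have "\<dots> = (\<Sum>i<n. if i = j then gform G (E!j) (E!j) * gform G v (E!j) * gform G (E!j) (E!j) else 0)"
      using j by (intro sum.cong refl) (auto simp: orth)
    also have "\<dots> = gform G (E!j) (E!j) * gform G v (E!j) * gform G (E!j) (E!j)"
      using j by simp
    also have "\<dots> = gform G v (E!j)" using eps[OF j] by auto
    finally show ?thesis .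
  qed
  define u where "u = v - w"
  have u: "u \<in> carrier_vec n" using v w by (simp add: u_def)
  have gu: "(E!j) \<bullet> (G *\<^sub>v u) = 0" if j: "j<n" for j
  proof -
    have "(E!j) \<bullet> (G *\<^sub>v u) = gform G (E!j) u" by (simp add: gform_def)
    also have "\<dots> = gform G u (E!j)" using gform_sym[OF G(1,2) Ec[OF j] u] .
    also have "\<dots> = 0" unfolding u_def using gform_minus[OF G(1) v w Ec[OF j]] gw[OF j] by simp
    finally show ?thesis .
  qed
  define M where "M = mat_of_rows n E"
  have M: "M \<in> carrier_mat n n" unfolding M_def using mat_of_rows_carrier(1)[of n E] lenE by simp
  have rowM: "row M i = E!i" if "i<n" for i using that lenE Ec unfolding M_def by simp
  have Mu: "M *\<^sub>v (G *\<^sub>v u) = 0\<^sub>v n"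
    by (rule eq_vecI) (use M rowM gu in auto)
  define D where "D = M * (G * transpose_mat M)"
  have D: "D \<in> carrier_mat n n" using M G unfolding D_def by auto
  have Dij: "D $$ (i,j) = gform G (E!i) (E!j)" if ij: "i<n" "j<n" for i j
  proof -
    have T: "transpose_mat M \<in> carrier_mat n n" using M by simp
    have "D $$ (i,j) = row M i \<bullet> col (G * transpose_mat M) j"
      unfolding D_def using M G(1) T ij by (simp del: col_mult2)
    also have "col (G * transpose_mat M) j = G *\<^sub>v col (transpose_mat M) j"
      by (rule col_mult2[OF G(1) T ij(2)])
    also have "col (transpose_mat M) j = row M j" using M ij by simp
    finally show ?thesis using rowM ij by (simp add: gform_def)
  qed
  have ut: "upper_triangular D" unfolding upper_triangular_def using D Dij orth by auto
  have "det D = prod_list (diag_mat D)" by (rule det_upper_triangular[OF ut D])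
  moreover have "0 \<notin> set (diag_mat D)"
    using D Dij eps unfolding diag_mat_def by force
  ultimately have "det D \<noteq> 0" by (simp add: prod_list_zero_iff)
  moreover have "det D = det M * (det G * det (transpose_mat M))"
    unfolding D_def using M G by (simp add: det_mult[of _ n])
  ultimately have dM: "det M \<noteq> 0" by auto
  have Gu: "G *\<^sub>v u = 0\<^sub>v n"
  proof (rule ccontr)
    assume "G *\<^sub>v u \<noteq> 0\<^sub>v n"
    moreover have "G *\<^sub>v u \<in> carrier_vec n" using G u by simp
    ultimately have "det M = 0" using det_0_iff_vec_prod_zero[OF M] Mu by blast
    with dM show False by simp
  qed
  have "u = 0\<^sub>v n"
  proof (rule ccontr)
    assume "u \<noteq> 0\<^sub>v n"
    hence "det G = 0" using det_0_iff_vec_prod_zero[OF G(1)] Gu u by blast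
    with G(3) show False by simp
  qed
  have "v = w"
  proof (rule eq_vecI)
    fix i assume i: "i < dim_vec w"
    hence "i<n" using w by simp
    hence "(v - w) $ i = 0" using \<open>u = 0\<^sub>v n\<close> unfolding u_def by simp
    thus "v $ i = w $ i" using \<open>i<n\<close> v w by simp
  next
    show "dim_vec v = dim_vec w" using v w by simp
  qed
  thus ?thesis unfolding w_def by simp
qed




lemma jacobi_op_eq:
  assumes sps: "scalar_product_space n G" and ex: "\<exists>E. orthonormal_basis n G E"
    and v: "v \<in> carrier_vec n"
    and R: "\<And>W. W \<in> carrier_vec n \<Longrightarrow> R Y X X W = gform G v W"
  shows "jacobi_op n G R X Y = v"
proof -
  define E where "E = (SOME E. orthonormal_basis n G E)"
  have ob: "orthonormal_basis n G E" unfolding E_def using ex by (rule someI_ex)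
  have Ec: "\<And>i. i<n \<Longrightarrow> E!i \<in> carrier_vec n" using ob unfolding orthonormal_basis_def by auto
  have "jacobi_op n G R X Y = vec n (\<lambda>k. \<Sum>i<n. gform G (E!i) (E!i) * gform G v (E!i) * E!i $ k)"
    unfolding jacobi_op_def Let_def E_def[symmetric] by (intro eq_vecI) (simp_all add: R Ec)
  also have "\<dots> = v" by (rule recon[OF sps ob v])
  finally show ?thesis .
qed

lemma sum6: "(\<Sum>k<(6::nat). f k) = f 0 + f 1 + f 2 + f 3 + f 4 + (f 5 :: real)"
  by (simp add: numeral_eq_Suc)

lemma lt6: "(i::nat) < 6 \<longleftrightarrow> i = 0 \<or> i = 1 \<or> i = 2 \<or> i = 3 \<or> i = 4 \<or> i = 5"
  by arith

lemma all6: "(\<forall>i<(6::nat). P i) \<longleftrightarrow> P 0 \<and> P 1 \<and> P 2 \<and> P 3 \<and> P 4 \<and> P 5"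
proof
  assume "\<forall>i<(6::nat). P i" thus "P 0 \<and> P 1 \<and> P 2 \<and> P 3 \<and> P 4 \<and> P 5" by simp
next
  assume H: "P 0 \<and> P 1 \<and> P 2 \<and> P 3 \<and> P 4 \<and> P 5"
  show "\<forall>i<(6::nat). P i"
  proof (intro allI impI)
    fix i :: nat assume "i < 6"
    hence "i = 0 \<or> i = 1 \<or> i = 2 \<or> i = 3 \<or> i = 4 \<or> i = 5" by (simp only: lt6)
    thus "P i" using H by (elim disjE) simp_all
  qed
qed

lemma mv6: "A \<in> carrier_mat 6 6 \<Longrightarrow> x \<in> carrier_vec 6 \<Longrightarrow> i < 6 \<Longrightarrow>
  (A *\<^sub>v x) $ i = (\<Sum>k<6. A $$ (i,k) * x $ k)"
  by (simp add: scalar_prod_def atLeast0LessThan)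

lemma mm6: "A \<in> carrier_mat 6 6 \<Longrightarrow> B \<in> carrier_mat 6 6 \<Longrightarrow> i < 6 \<Longrightarrow> j < 6 \<Longrightarrow>
  (A * B) $$ (i,j) = (\<Sum>k<6. A $$ (i,k) * (B :: real mat) $$ (k,j))"
  by (simp add: scalar_prod_def atLeast0LessThan)

definition G6 :: "real mat" where
  "G6 = mat 6 6 (\<lambda>(a,b). if a + 3 = b \<or> b + 3 = a then 1 else 0)"
definition J1m :: "real mat" where
  "J1m = mat 6 6 (\<lambda>(a,b). if a = 0 \<and> b = 4 then 1 else if a = 1 \<and> b = 3 then -1 else 0)"
definition J2m :: "real mat" where
  "J2m = mat 6 6 (\<lambda>(a,b). if a = 0 \<and> b = 5 then 1 else if a = 2 \<and> b = 3 then -1 else 0)"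

lemma G6c: "G6 \<in> carrier_mat 6 6" by (simp add: G6_def)
lemma J1c: "J1m \<in> carrier_mat 6 6" by (simp add: J1m_def)
lemma J2c: "J2m \<in> carrier_mat 6 6" by (simp add: J2m_def)

lemma gform_G6:
  assumes "x \<in> carrier_vec 6" "y \<in> carrier_vec 6"
  shows "gform G6 x y = x$0*y$3 + x$1*y$4 + x$2*y$5 + x$3*y$0 + x$4*y$1 + x$5*y$2"
  using assms by (simp add: gform_expand[OF G6c] sum6) (simp add: G6_def)

lemma J1_mult: "x \<in> carrier_vec 6 \<Longrightarrow>
  J1m *\<^sub>v x = vec 6 (\<lambda>i. if i = 0 then x$4 else if i = 1 then - x$3 else 0)"
  apply (rule eq_vecI)
   apply (simp_all add: mv6[OF J1c] sum6 del: index_mult_mat_vec)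
  apply (auto simp: J1m_def)
  done

lemma J2_mult: "x \<in> carrier_vec 6 \<Longrightarrow>
  J2m *\<^sub>v x = vec 6 (\<lambda>i. if i = 0 then x$5 else if i = 2 then - x$3 else 0)"
  apply (rule eq_vecI)
   apply (simp_all add: mv6[OF J2c] sum6 del: index_mult_mat_vec)
  apply (auto simp: J2m_def)
  done

lemma G6_sps: "scalar_product_space 6 G6"
proof -
  have T: "transpose_mat G6 = G6"
    by (rule eq_matI) (auto simp: G6_def)
  have "det G6 \<noteq> 0"
  proof
    assume "det G6 = 0"
    then obtain v where v: "v \<in> carrier_vec 6" "v \<noteq> 0\<^sub>v 6" "G6 *\<^sub>v v = 0\<^sub>v 6"
      using det_0_iff_vec_prod_zero[OF G6c] by blast
    have c: "(\<Sum>k<6. G6 $$ (i,k) * v $ k) = 0" if "i < 6" for i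
      using v(3) that mv6[OF G6c v(1) that] by simp
    have "v$0 = 0" using c[of 3] v(1) by (simp add: sum6 G6_def)
    moreover have "v$1 = 0" using c[of 4] v(1) by (simp add: sum6 G6_def)
    moreover have "v$2 = 0" using c[of 5] v(1) by (simp add: sum6 G6_def)
    moreover have "v$3 = 0" using c[of 0] v(1) by (simp add: sum6 G6_def)
    moreover have "v$4 = 0" using c[of 1] v(1) by (simp add: sum6 G6_def)
    moreover have "v$5 = 0" using c[of 2] v(1) by (simp add: sum6 G6_def)
    ultimately have "v = 0\<^sub>v 6"
      using v(1) by (intro eq_vecI) (auto simp: lt6)
    with v(2) show False by simp
  qed
  thus ?thesis using T G6c unfolding scalar_product_space_def by simp
qed

definition bv :: "nat \<Rightarrow> real \<Rightarrow> real vec" where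
  "bv p s = vec 6 (\<lambda>k. if k = p then 1 else if k = p + 3 then s / 2 else 0)"

definition E6 :: "real vec list" where
  "E6 = [bv 0 1, bv 1 1, bv 2 1, bv 0 (-1), bv 1 (-1), bv 2 (-1)]"

lemma E6_ob: "orthonormal_basis 6 G6 E6"
proof -
  have c: "bv p s \<in> carrier_vec 6" for p s by (simp add: bv_def)
  have g: "gform G6 (bv p s) (bv q t) = (if p = q then (s + t) / 2 else 0)" if "p < 3" "q < 3" for p q s t
  proof -
    have p: "p = 0 \<or> p = 1 \<or> p = 2" and q: "q = 0 \<or> q = 1 \<or> q = 2" using that by auto
    show ?thesis unfolding gform_G6[OF c c] using p q by (elim disjE) (simp_all add: bv_def)
  qed
  show ?thesis
    unfolding orthonormal_basis_def
    by (simp add: all6 E6_def c g)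
qed

lemma J_skew1: "skew_adjoint 6 G6 J1m"
  unfolding skew_adjoint_def using J1c
  by (auto simp: J1_mult gform_G6)

lemma J_skew2: "skew_adjoint 6 G6 J2m"
  unfolding skew_adjoint_def using J2c
  by (auto simp: J2_mult gform_G6)

lemma prods:
  "J1m * J1m = 0\<^sub>m 6 6" "J1m * J2m = 0\<^sub>m 6 6" "J2m * J1m = 0\<^sub>m 6 6" "J2m * J2m = 0\<^sub>m 6 6"
  by (rule eq_matI; simp add: mm6[OF J1c J1c] mm6[OF J1c J2c] mm6[OF J2c J1c] mm6[OF J2c J2c] sum6 del: index_mult_mat;
      auto simp: J1m_def J2m_def)+



definition X0 :: "real vec" where "X0 = vec 6 (\<lambda>k. if k = 1 \<or> k = 2 \<or> k = 4 \<or> k = 5 then 1 else 0)"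
definition Y0 :: "real vec" where "Y0 = vec 6 (\<lambda>k. if k = 3 then 1 else 0)"
definition V0 :: "real vec" where "V0 = vec 6 (\<lambda>k. if k = 1 then -3 else if k = 2 then 3 else 0)"
definition Jf :: "nat \<Rightarrow> real mat" where "Jf i = (if i = 0 then J1m else J2m)"
definition mu :: "nat \<Rightarrow> real" where "mu i = (if i = 1 then 1 else if i = 2 then -1 else 0)"

lemma X0c: "X0 \<in> carrier_vec 6" by (simp add: X0_def)
lemma Y0c: "Y0 \<in> carrier_vec 6" by (simp add: Y0_def)
lemma V0c: "V0 \<in> carrier_vec 6" by (simp add: V0_def)

lemma Rform: "mu 0 * R0 G X Y Z W + (\<Sum>i<2. mu (Suc i) * RJ G (Jf i) X Y Z W)
   = RJ G J1m X Y Z W - RJ G J2m X Y Z W"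
  by (simp add: numeral_2_eq_2 mu_def Jf_def)

lemma J1X: "J1m *\<^sub>v X0 = vec 6 (\<lambda>i. if i = 0 then 1 else 0)"
  by (simp add: J1_mult[OF X0c]) (rule eq_vecI, auto simp: X0_def)
lemma J2X: "J2m *\<^sub>v X0 = vec 6 (\<lambda>i. if i = 0 then 1 else 0)"
  by (simp add: J2_mult[OF X0c]) (rule eq_vecI, auto simp: X0_def)
lemma J1Y: "J1m *\<^sub>v Y0 = vec 6 (\<lambda>i. if i = 1 then -1 else 0)"
  by (simp add: J1_mult[OF Y0c]) (rule eq_vecI, auto simp: Y0_def)
lemma J2Y: "J2m *\<^sub>v Y0 = vec 6 (\<lambda>i. if i = 2 then -1 else 0)"
  by (simp add: J2_mult[OF Y0c]) (rule eq_vecI, auto simp: Y0_def)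

lemma R1: "W \<in> carrier_vec 6 \<Longrightarrow>
  mu 0 * R0 G6 Y0 X0 X0 W + (\<Sum>i<2. mu (Suc i) * RJ G6 (Jf i) Y0 X0 X0 W) = gform G6 (0\<^sub>v 6) W"
  unfolding Rform unfolding RJ_def J1X J2X J1Y J2Y
  by (simp add: gform_G6 X0c Y0c) (simp add: X0_def Y0_def)

lemma R2: "W \<in> carrier_vec 6 \<Longrightarrow>
  mu 0 * R0 G6 X0 Y0 Y0 W + (\<Sum>i<2. mu (Suc i) * RJ G6 (Jf i) X0 Y0 Y0 W) = gform G6 V0 W"
  unfolding Rform unfolding RJ_def J1X J2X J1Y J2Y
  by (simp add: gform_G6 X0c Y0c V0c) (simp add: X0_def Y0_def V0_def algebra_simps)

lemma exE6: "\<exists>E. orthonormal_basis 6 G6 E" using E6_ob by blast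

lemma nd: "\<not> jacobi_dual 6 G6
   (\<lambda>X Y Z W. mu 0 * R0 G6 X Y Z W + (\<Sum>i<2. mu (Suc i) * RJ G6 (Jf i) X Y Z W))"
  (is "\<not> jacobi_dual 6 G6 ?R")
proof
  assume jd: "jacobi_dual 6 G6 ?R"
  have gX: "gform G6 X0 X0 \<noteq> 0" by (simp add: gform_G6 X0c) (simp add: X0_def)
  have j1: "jacobi_op 6 G6 ?R X0 Y0 = 0\<^sub>v 6"
    by (rule jacobi_op_eq[OF G6_sps exE6 zero_carrier_vec]) (simp add: R1)
  have Y0nz: "Y0 \<noteq> 0\<^sub>v 6"
  proof -
    have a: "Y0 $ 3 = 1" by (simp add: Y0_def)
    have b: "(0\<^sub>v 6 :: real vec) $ 3 = 0" by simp
    show ?thesis using a b by force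
  qed
  have e1: "is_eigenvector 6 (jacobi_op 6 G6 ?R X0) Y0"
    unfolding is_eigenvector_def
  proof (intro conjI Y0c Y0nz exI)
    show "jacobi_op 6 G6 ?R X0 Y0 = 0 \<cdot>\<^sub>v Y0" unfolding j1 using Y0c by (intro eq_vecI) auto
  qed
  have j2: "jacobi_op 6 G6 ?R Y0 X0 = V0"
    by (rule jacobi_op_eq[OF G6_sps exE6 V0c]) (simp add: R2)
  have "is_eigenvector 6 (jacobi_op 6 G6 ?R Y0) X0"
    using jd gX e1 X0c Y0c unfolding jacobi_dual_def by blast
  then obtain lam where L: "V0 = lam \<cdot>\<^sub>v X0" unfolding is_eigenvector_def j2 by blast
  have "(lam \<cdot>\<^sub>v X0) $ 1 = lam * X0 $ 1" "(lam \<cdot>\<^sub>v X0) $ 2 = lam * X0 $ 2"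
    using carrier_vecD[OF X0c] by simp_all
  hence "V0 $ 1 = lam * X0 $ 1" "V0 $ 2 = lam * X0 $ 2" unfolding L[symmetric] .
  thus False by (simp add: V0_def X0_def)
qed

theorem mainTheorem3:
  shows "\<exists>(n::nat) (G::real mat) (m::nat) (J::nat \<Rightarrow> real mat) (c::nat \<Rightarrow> real) (\<mu>::nat \<Rightarrow> real).
     scalar_product_space n G \<and> 1 \<le> m \<and>
     (\<forall>i<m. skew_adjoint n G (J i)) \<and>
     (\<forall>i<m. \<forall>j<m. J i * J j + J j * J i = (if i = j then 2 * c i else 0) \<cdot>\<^sub>m 1\<^sub>m n) \<and>
     \<not> jacobi_dual n G
         (\<lambda>X Y Z W. \<mu> 0 * R0 G X Y Z W + (\<Sum>i<m. \<mu> (Suc i) * RJ G (J i) X Y Z W))"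
proof (intro exI conjI)
  show "scalar_product_space 6 G6" by (rule G6_sps)
  show "1 \<le> (2::nat)" by simp
  show "\<forall>i<2. skew_adjoint 6 G6 (Jf i)"
    using J_skew1 J_skew2 by (auto simp: Jf_def)
  have z: "0\<^sub>m 6 6 + 0\<^sub>m 6 6 = (0::real) \<cdot>\<^sub>m 1\<^sub>m 6" by (rule eq_matI) auto
  show "\<forall>i<2. \<forall>j<2. Jf i * Jf j + Jf j * Jf i = (if i = j then 2 * (\<lambda>_. 0::real) i else 0) \<cdot>\<^sub>m 1\<^sub>m 6"
    by (auto simp: Jf_def prods z numeral_2_eq_2 less_Suc_eq)
  show "\<not> jacobi_dual 6 G6
   (\<lambda>X Y Z W. mu 0 * R0 G6 X Y Z W + (\<Sum>i<2. mu (Suc i) * RJ G6 (Jf i) X Y Z W))"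
    by (rule nd)
qed


end
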